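(* Let $X$ be a regular closed subset of a topological space $T$ and $S$ a connected component of $-X$. If $-X$ has finitely many components, then $\delta S\subseteq X$. Alternatively, if $T$ is locally connected, then $\delta S\subseteq X$.
   Context: $-X$ denotes $\overline{T\setminus X}$, the closure of the complement of $X$. $\delta S=\overline{S}\setminus\mathrm{int}(S)$ is the boundary of $S$. A component is a maximal connected subset. $T$ is locally connected if every neighbourhood of every point includes a connected neighbourhood of that point. *)

theory Defs
  imports "HOL-Analysis.Analysis"
begin

definition regular_closed_in :: "'a topology \<Rightarrow> 'a set \<Rightarrow> bool" where
  "regular_closed_in T X \<longleftrightarrow> X \<subseteq> topspace T \<and> T closure_of (T interior_of X) = X"

text \<open>The paper's -X: closure of the complement of X.\<close>
definition neg_in :: "'a topology \<Rightarrow> 'a set \<Rightarrow> 'a set" where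
  "neg_in T X = T closure_of (topspace T - X)"

end

theory Submission
  imports Defs
begin

theorem lemma2p1:
  fixes T :: "'a topology" and X S :: "'a set"
  assumes "regular_closed_in T X"
    and "S \<in> connected_components_of (subtopology T (neg_in T X))"
    and "finite (connected_components_of (subtopology T (neg_in T X))) \<or> locally_connected_space T"
  shows "T frontier_of S \<subseteq> X"
proof
  fix x assume xf: "x \<in> T frontier_of S"
  define Y where "Y = neg_in T X"
  have S: "S \<in> connected_components_of (subtopology T Y)" using assms(2) Y_def by simp
  have clY: "closedin T Y" unfolding Y_def neg_in_def by simp
  have clX: "closedin T X" using assms(1) unfolding regular_closed_in_def by (metis closedin_closure_of)
  have tY: "topspace (subtopology T Y) = Y" using clY closedin_subset by auto
  have SY: "S \<subseteq> Y" using connected_components_of_subset[OF S] tY by simp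
  have "closedin (subtopology T Y) S" by (rule closedin_connected_components_of[OF S])
  hence clS: "closedin T S" using clY closedin_trans_full by blast
  have "x \<in> T closure_of S" using xf by (simp add: frontier_of_def)
  hence xS: "x \<in> S" using clS by (simp add: closure_of_closedin)
  have xnI: "x \<notin> T interior_of S" using xf by (simp add: frontier_of_def)
  show "x \<in> X"
  proof (rule ccontr)
    assume xX: "x \<notin> X"
    define U where "U = topspace T - X"
    have oU: "openin T U" unfolding U_def using clX by (simp add: openin_diff)
    have UY: "U \<subseteq> Y" unfolding U_def Y_def neg_in_def by (simp add: closure_of_subset)
    have xU: "x \<in> U" unfolding U_def using xX xS SY clY closedin_subset by blast
    have "\<exists>W. openin T W \<and> x \<in> W \<and> W \<subseteq> S"
      using assms(3)
    proof
      assume fin: "finite (connected_components_of (subtopology T (neg_in T X)))"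
      define C where "C = \<Union> (connected_components_of (subtopology T Y) - {S})"
      have "closedin (subtopology T Y) C" unfolding C_def
        using fin Y_def closedin_connected_components_of by (intro closedin_Union) auto
      hence "openin (subtopology T Y) (Y - C)" using tY by (metis openin_diff openin_topspace)
      moreover have "Y - C = S"
        using complement_connected_components_of_Union[OF S] tY SY unfolding C_def by auto
      ultimately obtain Ou where Ou: "openin T Ou" "S = Ou \<inter> Y" by (auto simp: openin_subtopology)
      show ?thesis using Ou oU xU xS UY by (intro exI[of _ "Ou \<inter> U"]) auto
    next
      assume lc: "locally_connected_space T"
      then obtain V where V: "openin T V" "connectedin T V" "x \<in> V" "V \<subseteq> U"
        using oU xU unfolding locally_connected_space by blast
      have "connectedin (subtopology T Y) V" using V UY by (simp add: connectedin_subtopology)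
      moreover have "\<not> disjnt S V" using xS V by (auto simp: disjnt_def)
      ultimately have "V \<subseteq> S" using connected_components_of_maximal[OF S] by blast
      thus ?thesis using V by blast
    qed
    then obtain W where "openin T W" "x \<in> W" "W \<subseteq> S" by blast
    hence "x \<in> T interior_of S" by (meson interior_of_maximal subsetD)
    thus False using xnI by simp
  qed
qed

end
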